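(* Let $p_1,\dots,p_d\in(0,1)$ with $p_i\neq\frac12$ for all $i$, and let $\mu(X)=\prod_{i:x_i=1}p_i\prod_{i:x_i=0}(1-p_i)$ for $X\in Q_d$. Then this distribution has an equilibrium.
   Context: $Q_d=\{0,1\}^d$ with the Hamming distance $d(X,Y)=|\{i: x_i\neq y_i\}|$. For a probability distribution $\mu$ on $Q_d$ (extended additively to subsets), and $A,B\in Q_d$, let $V(A,B)=\{X: d(X,A)<d(X,B)\}$, $T(A,B)=\{X: d(X,A)=d(X,B)\}$, $P_1(A,B)=\mu(V(A,B))+\frac12\mu(T(A,B))$, $P_2(A,B)=\mu(V(B,A))+\frac12\mu(T(A,B))$. $(A,B)$ is an equilibrium if $P_1(A,B)\ge P_1(A',B)$ for all $A'\in Q_d$ and $P_2(A,B)\ge P_2(A,B')$ for all $B'\in Q_d$. *)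

theory Defs
  imports Complex_Main
begin

text \<open>The hypercube Q_d: points are functions nat => bool, coordinates i < d,
  fixed to False outside {..<d} (so Q_d has exactly 2^d elements).\<close>
definition cube :: "nat \<Rightarrow> (nat \<Rightarrow> bool) set" where
  "cube d = {X. \<forall>i. d \<le> i \<longrightarrow> \<not> X i}"

definition hamming :: "nat \<Rightarrow> (nat \<Rightarrow> bool) \<Rightarrow> (nat \<Rightarrow> bool) \<Rightarrow> nat" where
  "hamming d X Y = card {i\<in>{..<d}. X i \<noteq> Y i}"

definition measure_of :: "nat \<Rightarrow> ((nat \<Rightarrow> bool) \<Rightarrow> real) \<Rightarrow> (nat \<Rightarrow> bool) set \<Rightarrow> real" where
  "measure_of d \<mu> S = (\<Sum>X\<in>S \<inter> cube d. \<mu> X)"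

definition Vor :: "nat \<Rightarrow> (nat \<Rightarrow> bool) \<Rightarrow> (nat \<Rightarrow> bool) \<Rightarrow> (nat \<Rightarrow> bool) set" where
  "Vor d A B = {X\<in>cube d. hamming d X A < hamming d X B}"

definition Tie :: "nat \<Rightarrow> (nat \<Rightarrow> bool) \<Rightarrow> (nat \<Rightarrow> bool) \<Rightarrow> (nat \<Rightarrow> bool) set" where
  "Tie d A B = {X\<in>cube d. hamming d X A = hamming d X B}"

definition payoff1 :: "nat \<Rightarrow> ((nat \<Rightarrow> bool) \<Rightarrow> real) \<Rightarrow> (nat \<Rightarrow> bool) \<Rightarrow> (nat \<Rightarrow> bool) \<Rightarrow> real" where
  "payoff1 d \<mu> A B = measure_of d \<mu> (Vor d A B) + measure_of d \<mu> (Tie d A B) / 2"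

definition payoff2 :: "nat \<Rightarrow> ((nat \<Rightarrow> bool) \<Rightarrow> real) \<Rightarrow> (nat \<Rightarrow> bool) \<Rightarrow> (nat \<Rightarrow> bool) \<Rightarrow> real" where
  "payoff2 d \<mu> A B = measure_of d \<mu> (Vor d B A) + measure_of d \<mu> (Tie d A B) / 2"

definition equilibrium :: "nat \<Rightarrow> ((nat \<Rightarrow> bool) \<Rightarrow> real) \<Rightarrow> (nat \<Rightarrow> bool) \<Rightarrow> (nat \<Rightarrow> bool) \<Rightarrow> bool" where
  "equilibrium d \<mu> A B \<longleftrightarrow> A \<in> cube d \<and> B \<in> cube d \<and>
     (\<forall>A'\<in>cube d. payoff1 d \<mu> A B \<ge> payoff1 d \<mu> A' B) \<and>
     (\<forall>B'\<in>cube d. payoff2 d \<mu> A B \<ge> payoff2 d \<mu> A B')"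

definition product_dist :: "nat \<Rightarrow> (nat \<Rightarrow> real) \<Rightarrow> (nat \<Rightarrow> bool) \<Rightarrow> real" where
  "product_dist d p X = (\<Prod>i<d. if X i then p i else 1 - p i)"

end

theory Submission
  imports Defs
begin

lemma cube_Suc_split:
  "cube (Suc n) = cube n \<union> (\<lambda>X. X(n:=True)) ` cube n"
proof
  show "cube (Suc n) \<subseteq> cube n \<union> (\<lambda>X. X(n:=True)) ` cube n"
  proof
    fix X assume X: "X \<in> cube (Suc n)"
    show "X \<in> cube n \<union> (\<lambda>X. X(n:=True)) ` cube n"
    proof (cases "X n")
      case True
      have "X(n:=False) \<in> cube n" using X by (auto simp: cube_def)
      moreover have "X = (X(n:=False))(n:=True)" using True by (auto simp: fun_eq_iff)
      ultimately show ?thesis by (intro UnI2 image_eqI)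
    next
      case False
      have "X \<in> cube n" unfolding cube_def
      proof (intro CollectI allI impI)
        fix i assume "n \<le> i"
        then show "\<not> X i"
        proof (cases "i = n")
          case False
          then have "Suc n \<le> i" using \<open>n \<le> i\<close> by simp
          then show ?thesis using X by (simp add: cube_def)
        qed (use \<open>\<not> X n\<close> in simp)
      qed
      then show ?thesis by (rule UnI1)
    qed
  qed
next
  show "cube n \<union> (\<lambda>X. X(n:=True)) ` cube n \<subseteq> cube (Suc n)"
    by (auto simp: cube_def)
qed

lemma finite_cube: "finite (cube n)"
proof (induction n)
  case 0
  have "cube 0 = {\<lambda>_. False}" by (auto simp: cube_def fun_eq_iff)
  then show ?case by simp
next
  case (Suc n)
  then show ?case by (simp add: cube_Suc_split)
qed

lemma sum_cube_Suc:
  "(\<Sum>X\<in>cube (Suc n). g X) = (\<Sum>X\<in>cube n. g X) + (\<Sum>X\<in>cube n. g (X(n:=True)))"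
proof -
  have disj: "cube n \<inter> (\<lambda>X. X(n:=True)) ` cube n = {}" by (auto simp: cube_def)
  have inj: "inj_on (\<lambda>X. X(n:=True)) (cube n)"
  proof (rule inj_onI)
    fix X Y assume "X \<in> cube n" "Y \<in> cube n" "X(n:=True) = Y(n:=True)"
    note h = this
    show "X = Y"
    proof
      fix i show "X i = Y i"
      proof (cases "i = n")
        case True then show ?thesis using h(1,2) by (simp add: cube_def)
      next
        case False then show ?thesis using fun_cong[OF h(3), of i] by simp
      qed
    qed
  qed
  have "(\<Sum>X\<in>cube (Suc n). g X) = (\<Sum>X\<in>cube n. g X) + (\<Sum>X\<in>(\<lambda>X. X(n:=True)) ` cube n. g X)"
    unfolding cube_Suc_split by (rule sum.union_disjoint) (use finite_cube disj in auto)
  also have "(\<Sum>X\<in>(\<lambda>X. X(n:=True)) ` cube n. g X) = (\<Sum>X\<in>cube n. g (X(n:=True)))"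
    using sum.reindex[OF inj] by simp
  finally show ?thesis .
qed

definition G :: "nat \<Rightarrow> (nat\<Rightarrow>bool\<Rightarrow>real) \<Rightarrow> (nat\<Rightarrow>bool\<Rightarrow>int) \<Rightarrow> (int\<Rightarrow>real) \<Rightarrow> real" where
  "G n w c f = (\<Sum>X\<in>cube n. (\<Prod>i<n. w i (X i)) * f (\<Sum>i<n. c i (X i)))"

lemma G_Suc:
  "G (Suc n) w c f = w n True * G n w c (\<lambda>x. f (x + c n True)) + w n False * G n w c (\<lambda>x. f (x + c n False))"
proof -
  have A: "\<And>X. X \<in> cube n \<Longrightarrow> (\<Prod>i<n. w i ((X(n:=True)) i)) = (\<Prod>i<n. w i (X i))"
    by (rule prod.cong) auto
  have B: "\<And>X. X \<in> cube n \<Longrightarrow> (\<Sum>i<n. c i ((X(n:=True)) i)) = (\<Sum>i<n. c i (X i))"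
    by (rule sum.cong) auto
  have B2: "\<And>X. (\<Sum>i<n. c i (if i = n then True else X i)) = (\<Sum>i<n. c i (X i))"
    by (rule sum.cong) auto
  have A2: "\<And>X. (\<Prod>i<n. w i (if i = n then True else X i)) = (\<Prod>i<n. w i (X i))"
    by (rule prod.cong) auto
  have C: "\<And>X. X \<in> cube n \<Longrightarrow> X n = False" by (auto simp: cube_def)
  show ?thesis
    unfolding G_def sum_cube_Suc
    by (simp add: A B C A2 B2 sum_distrib_left algebra_simps cong: sum.cong)
qed

lemma G_mono:
  assumes "\<forall>i<n. \<forall>b. 0 \<le> w i b" and "\<And>x. f x \<le> g x"
  shows "G n w c f \<le> G n w c g"
  unfolding G_def
  by (rule sum_mono, rule mult_left_mono) (use assms in \<open>auto intro: prod_nonneg\<close>)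

lemma G_ineq:
  assumes "\<forall>i<n. 0 \<le> w i True \<and> 0 \<le> w i False \<and> ((c i True = 0 \<and> c i False = 0) \<or>
     (c i True = 1 \<and> c i False = -1 \<and> w i False \<le> w i True) \<or>
     (c i True = -1 \<and> c i False = 1 \<and> w i True \<le> w i False))"
  and "mono f"
  shows "G n w (\<lambda>i b. - c i b) f \<le> G n w c f"
  using assms
proof (induction n arbitrary: f)
  case 0
  then show ?case by (simp add: G_def)
next
  case (Suc n)
  have hn: "\<forall>i<n. 0 \<le> w i True \<and> 0 \<le> w i False \<and> ((c i True = 0 \<and> c i False = 0) \<or>
     (c i True = 1 \<and> c i False = -1 \<and> w i False \<le> w i True) \<or>
     (c i True = -1 \<and> c i False = 1 \<and> w i True \<le> w i False))" using Suc.prems(1) by auto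
  have wn: "\<forall>i<n. \<forall>b. 0 \<le> w i b"
  proof (intro allI impI)
    fix i b assume "i < n" then show "0 \<le> w i b" using hn by (cases b) auto
  qed
  have mono_sh: "\<And>k. mono (\<lambda>x. f (x + k))" using Suc.prems(2) by (auto simp: mono_def)
  have IH: "\<And>k. G n w (\<lambda>i b. - c i b) (\<lambda>x. f (x + k)) \<le> G n w c (\<lambda>x. f (x + k))"
    using Suc.IH[OF hn mono_sh] .
  have M: "G n w c (\<lambda>x. f (x + -1)) \<le> G n w c (\<lambda>x. f (x + 1))"
    by (rule G_mono[OF wn]) (use Suc.prems(2) in \<open>auto simp: mono_def\<close>)
  have M': "G n w (\<lambda>i b. - c i b) (\<lambda>x. f (x + -1)) \<le> G n w (\<lambda>i b. - c i b) (\<lambda>x. f (x + 1))"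
    by (rule G_mono[OF wn]) (use Suc.prems(2) in \<open>auto simp: mono_def\<close>)
  define X1 where "X1 = G n w c (\<lambda>x. f (x + 1))"
  define X2 where "X2 = G n w c (\<lambda>x. f (x + -1))"
  define Y1 where "Y1 = G n w (\<lambda>i b. - c i b) (\<lambda>x. f (x + 1))"
  define Y2 where "Y2 = G n w (\<lambda>i b. - c i b) (\<lambda>x. f (x + -1))"
  have i1: "Y1 \<le> X1" "Y2 \<le> X2" "X2 \<le> X1" "Y2 \<le> Y1"
    using IH[of 1] IH[of "-1"] M M' by (auto simp: X1_def X2_def Y1_def Y2_def)
  have cn: "0 \<le> w n True \<and> 0 \<le> w n False \<and> ((c n True = 0 \<and> c n False = 0) \<or>
     (c n True = 1 \<and> c n False = -1 \<and> w n False \<le> w n True) \<or>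
     (c n True = -1 \<and> c n False = 1 \<and> w n True \<le> w n False))" using Suc.prems(1) by auto
  then consider "0 \<le> w n True" "0 \<le> w n False" "c n True = 0" "c n False = 0"
    | "0 \<le> w n False" "c n True = 1" "c n False = -1" "w n False \<le> w n True"
    | "0 \<le> w n True" "c n True = -1" "c n False = 1" "w n True \<le> w n False" by blast
  then show ?case
  proof cases
    case 1
    have "G n w (\<lambda>i b. - c i b) f \<le> G n w c f" using IH[of 0] by simp
    moreover have "G (Suc n) w c f = (w n True + w n False) * G n w c f"
      using 1 by (simp add: G_Suc distrib_right)
    moreover have "G (Suc n) w (\<lambda>i b. - c i b) f = (w n True + w n False) * G n w (\<lambda>i b. - c i b) f"
      using 1 by (simp add: G_Suc distrib_right)
    ultimately show ?thesis using 1 by (simp add: mult_left_mono)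
  next
    case 2
    have e1: "G (Suc n) w c f = w n True * X1 + w n False * X2"
      using 2 by (simp add: G_Suc X1_def X2_def)
    have e2: "G (Suc n) w (\<lambda>i b. - c i b) f = w n True * Y2 + w n False * Y1"
      using 2 by (simp add: G_Suc Y1_def Y2_def)
    have "0 \<le> w n False * ((X1-Y1)+(X2-Y2))" using 2 i1 by (intro mult_nonneg_nonneg) auto
    moreover have "0 \<le> (w n True - w n False) * (X1 - Y2)" using 2 i1 by (intro mult_nonneg_nonneg) auto
    moreover have "w n True * X1 + w n False * X2 - (w n True * Y2 + w n False * Y1)
       = w n False * ((X1-Y1)+(X2-Y2)) + (w n True - w n False) * (X1 - Y2)"
      by (simp add: algebra_simps)
    ultimately show ?thesis unfolding e1 e2 by linarith
  next
    case 3
    have e1: "G (Suc n) w c f = w n True * X2 + w n False * X1"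
      using 3 by (simp add: G_Suc X1_def X2_def)
    have e2: "G (Suc n) w (\<lambda>i b. - c i b) f = w n True * Y1 + w n False * Y2"
      using 3 by (simp add: G_Suc Y1_def Y2_def)
    have "0 \<le> w n True * ((X1-Y1)+(X2-Y2))" using 3 i1 by (intro mult_nonneg_nonneg) auto
    moreover have "0 \<le> (w n False - w n True) * (X1 - Y2)" using 3 i1 by (intro mult_nonneg_nonneg) auto
    moreover have "w n True * X2 + w n False * X1 - (w n True * Y1 + w n False * Y2)
       = w n True * ((X1-Y1)+(X2-Y2)) + (w n False - w n True) * (X1 - Y2)"
      by (simp add: algebra_simps)
    ultimately show ?thesis unfolding e1 e2 by linarith
  qed
qed


lemma msum: "measure_of d \<mu> {X\<in>cube d. P X} = (\<Sum>X\<in>cube d. if P X then \<mu> X else 0)"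
proof -
  have "{X\<in>cube d. P X} \<inter> cube d = {X\<in>cube d. P X}" by auto
  then show ?thesis unfolding measure_of_def using sum.inter_filter[OF finite_cube] by simp
qed

lemma card_int_sum: "int (card {i\<in>{..<(d::nat)}. P i}) = (\<Sum>i<d. if P i then 1 else 0)"
proof -
  have "card {i\<in>{..<d}. P i} = (\<Sum>i\<in>{i\<in>{..<d}. P i}. 1)" by simp
  also have "\<dots> = (\<Sum>i<d. if P i then 1 else 0)" by (subst sum.inter_filter) auto
  finally have "int (card {i\<in>{..<d}. P i}) = (\<Sum>i<d. int (if P i then 1 else 0))"
    by (simp only: of_nat_sum)
  also have "\<dots> = (\<Sum>i<d. if P i then 1 else 0)" by (rule sum.cong) auto
  finally show ?thesis .
qed

definition sg :: "int \<Rightarrow> real" where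
  "sg x = (if x > 0 then 1 else if x < 0 then -1 else 0)"

lemma sg_neg: "sg (- x) = - sg x" by (simp add: sg_def)

lemma key:
  fixes d :: nat and p :: "nat \<Rightarrow> real" and A' :: "nat \<Rightarrow> bool"
  assumes p01: "\<forall>i<d. 0 < p i \<and> p i < 1"
  defines "M \<equiv> (\<lambda>i. i < d \<and> p i > 1/2)"
  shows "(\<Sum>X\<in>cube d. if hamming d X A' < hamming d X M then product_dist d p X else 0)
       \<le> (\<Sum>X\<in>cube d. if hamming d X M < hamming d X A' then product_dist d p X else 0)"
proof -
  define w where "w = (\<lambda>i b. if b then p i else 1 - p i)"
  define c :: "nat \<Rightarrow> bool \<Rightarrow> int" where
    "c = (\<lambda>i b. (if b \<noteq> A' i then 1 else 0) - (if b \<noteq> M i then 1 else 0))"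
  have cond: "\<forall>i<d. 0 \<le> w i True \<and> 0 \<le> w i False \<and> ((c i True = 0 \<and> c i False = 0) \<or>
     (c i True = 1 \<and> c i False = -1 \<and> w i False \<le> w i True) \<or>
     (c i True = -1 \<and> c i False = 1 \<and> w i True \<le> w i False))"
  proof (intro allI impI)
    fix i assume i: "i < d"
    have pi: "0 < p i" "p i < 1" using p01 i by auto
    have wT: "w i True = p i" and wF: "w i False = 1 - p i" by (simp_all add: w_def)
    show "0 \<le> w i True \<and> 0 \<le> w i False \<and> ((c i True = 0 \<and> c i False = 0) \<or>
     (c i True = 1 \<and> c i False = -1 \<and> w i False \<le> w i True) \<or>
     (c i True = -1 \<and> c i False = 1 \<and> w i True \<le> w i False))"
    proof (cases "p i > 1/2")
      case True
      then have "M i" using i by (simp add: M_def)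
      then show ?thesis using True pi unfolding wT wF by (cases "A' i") (simp_all add: c_def)
    next
      case False
      then have "\<not> M i" by (simp add: M_def)
      then show ?thesis using False pi unfolding wT wF by (cases "A' i") (simp_all add: c_def)
    qed
  qed
  have mono_sg: "mono sg" by (auto simp: mono_def sg_def)
  have ineq: "G d w (\<lambda>i b. - c i b) sg \<le> G d w c sg" by (rule G_ineq[OF cond mono_sg])
  have neg: "G d w (\<lambda>i b. - c i b) sg = - G d w c sg"
    unfolding G_def by (simp add: sum_negf sg_neg)
  have G0: "0 \<le> G d w c sg" using ineq neg by simp
  define D where "D = (\<lambda>X. int (hamming d X A') - int (hamming d X M))"
  have DX: "\<And>X. (\<Sum>i<d. c i (X i)) = D X"
    unfolding D_def hamming_def card_int_sum c_def by (simp add: sum_subtractf)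
  have "G d w c sg = (\<Sum>X\<in>cube d. product_dist d p X * sg (D X))"
    unfolding G_def DX by (simp add: w_def product_dist_def)
  also have "\<dots> = (\<Sum>X\<in>cube d. if hamming d X M < hamming d X A' then product_dist d p X else 0)
       - (\<Sum>X\<in>cube d. if hamming d X A' < hamming d X M then product_dist d p X else 0)"
    unfolding sum_subtractf[symmetric] by (rule sum.cong) (auto simp: sg_def D_def)
  finally show ?thesis using G0 by simp
qed

theorem mainTheorem8:
  fixes d :: nat and p :: "nat \<Rightarrow> real"
  assumes "\<forall>i<d. 0 < p i \<and> p i < 1"
    and "\<forall>i<d. p i \<noteq> 1/2"
  shows "\<exists>A B. equilibrium d (product_dist d p) A B"
proof -
  define M where "M \<equiv> (\<lambda>i. i < d \<and> p i > 1/2)"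
  define \<mu> where "\<mu> = product_dist d p"
  have Mc: "M \<in> cube d" by (auto simp: cube_def M_def)
  have MM1: "payoff1 d \<mu> M M = (\<Sum>X\<in>cube d. \<mu> X) / 2"
    unfolding payoff1_def Vor_def Tie_def msum by simp
  have MM2: "payoff2 d \<mu> M M = (\<Sum>X\<in>cube d. \<mu> X) / 2"
    unfolding payoff2_def Vor_def Tie_def msum by simp
  have gen: "measure_of d \<mu> (Vor d A' M) + measure_of d \<mu> (Tie d A' M) / 2 \<le> (\<Sum>X\<in>cube d. \<mu> X) / 2"
    for A'
  proof -
    let ?h1 = "\<lambda>X. hamming d X A'" and ?h2 = "\<lambda>X. hamming d X M"
    have K: "(\<Sum>X\<in>cube d. if ?h1 X < ?h2 X then \<mu> X else 0)
       \<le> (\<Sum>X\<in>cube d. if ?h2 X < ?h1 X then \<mu> X else 0)"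
      using key[OF assms(1), of A'] unfolding \<mu>_def M_def by simp
    have T: "(\<Sum>X\<in>cube d. \<mu> X) = (\<Sum>X\<in>cube d. if ?h1 X < ?h2 X then \<mu> X else 0)
       + (\<Sum>X\<in>cube d. if ?h2 X < ?h1 X then \<mu> X else 0)
       + (\<Sum>X\<in>cube d. if ?h1 X = ?h2 X then \<mu> X else 0)"
      unfolding sum.distrib[symmetric] by (rule sum.cong) auto
    show ?thesis unfolding Vor_def Tie_def msum using K T by simp
  qed
  have "equilibrium d \<mu> M M"
    unfolding equilibrium_def
  proof (intro conjI ballI Mc)
    fix A' assume "A' \<in> cube d"
    show "payoff1 d \<mu> A' M \<le> payoff1 d \<mu> M M"
      unfolding MM1 using gen[of A'] by (simp add: payoff1_def)
  next
    fix B' assume "B' \<in> cube d"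
    have "Tie d M B' = Tie d B' M" by (auto simp: Tie_def)
    then show "payoff2 d \<mu> M B' \<le> payoff2 d \<mu> M M"
      unfolding MM2 using gen[of B'] by (simp add: payoff2_def)
  qed
  then show ?thesis unfolding \<mu>_def by blast
qed

end
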